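(* Let $\mathbf{F}_q$ be a finite field of characteristic $p$ and $b\in\mathbf{F}_q$. For $1\le k\le q-1$, $$N(k,b,\mathbf{F}_q^* )=\frac1q\binom{q-1}{k}+(-1)^{k+\lfloor k/p\rfloor}\frac{v(b)}{q}\binom{q/p-1}{\lfloor k/p\rfloor}.$$ For $1\le k\le q$: if $p\nmid k$ then $N(k,b,\mathbf{F}_q)=\frac1q\binom qk$; if $p\mid k$ then $$N(k,b,\mathbf{F}_q)=\frac1q\binom qk+(-1)^{k+k/p}\frac{v(b)}{q}\binom{q/p}{k/p}.$$
   Context: $N(k,b,D)$ denotes the number of $k$-element subsets $\{x_1,\dots,x_k\}\subseteq D$ with $x_1+\dots+x_k=b$. $v(b)=-1$ if $b\ne0$ and $v(b)=q-1$ if $b=0$. Binomial coefficients $\binom{x}{m}=x(x-1)\cdots(x-m+1)/m!$ for real $x$, integer $m\ge0$. *)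

theory Defs
  imports Complex_Main "HOL-Library.Cardinality"
begin

definition Nsub :: "nat \<Rightarrow> 'a::comm_monoid_add \<Rightarrow> 'a set \<Rightarrow> nat" where
  "Nsub k b D = card {S. S \<subseteq> D \<and> card S = k \<and> finite S \<and> (\<Sum>x\<in>S. x) = b}"

definition vq :: "'a::{finite,zero} \<Rightarrow> real" where
  "vq b = (if b = 0 then real CARD('a) - 1 else -1)"

end

theory Submission imports Defs begin

lemma shift_props:
  fixes t :: "'a::comm_ring_1"
  assumes "finite S"
  shows "card ((\<lambda>x. x + t) ` S) = card S \<and>
         (\<Sum>x\<in>(\<lambda>x. x + t) ` S. x) = (\<Sum>x\<in>S. x) + of_nat (card S) * t"
proof -
  have inj: "inj_on (\<lambda>x::'a. x + t) S" by (simp add: inj_on_def)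
  have "(\<Sum>x\<in>(\<lambda>x. x + t) ` S. x) = (\<Sum>x\<in>S. x + t)"
    using inj by (simp add: sum.reindex)
  also have "\<dots> = (\<Sum>x\<in>S. x) + of_nat (card S) * t" by (simp add: sum.distrib)
  finally show ?thesis using inj by (simp add: card_image)
qed

lemma Nsub_shift:
  fixes t :: "'a::comm_ring_1"
  shows "Nsub k b D = Nsub k (b + of_nat k * t) ((\<lambda>x. x + t) ` D)"
  unfolding Nsub_def
proof (rule bij_betw_same_card[of "\<lambda>S. (\<lambda>x. x + t) ` S"],
       rule bij_betw_byWitness[where f' = "\<lambda>S. (\<lambda>x. x + (-t)) ` S"])
  show "\<forall>a\<in>{S. S \<subseteq> D \<and> card S = k \<and> finite S \<and> sum (\<lambda>x. x) S = b}.
          (\<lambda>x. x + - t) ` (\<lambda>x. x + t) ` a = a"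
    by (simp add: image_image)
  show "\<forall>a'\<in>{S. S \<subseteq> (\<lambda>x. x + t) ` D \<and> card S = k \<and> finite S \<and> sum (\<lambda>x. x) S = b + of_nat k * t}.
          (\<lambda>x. x + t) ` (\<lambda>x. x + - t) ` a' = a'"
    by (simp add: image_image)
  show "(\<lambda>S. (\<lambda>x. x + t) ` S) ` {S. S \<subseteq> D \<and> card S = k \<and> finite S \<and> sum (\<lambda>x. x) S = b}
        \<subseteq> {S. S \<subseteq> (\<lambda>x. x + t) ` D \<and> card S = k \<and> finite S \<and> sum (\<lambda>x. x) S = b + of_nat k * t}"
    using shift_props[of _ t] by auto
  show "(\<lambda>S. (\<lambda>x. x + - t) ` S) ` {S. S \<subseteq> (\<lambda>x. x + t) ` D \<and> card S = k \<and> finite S \<and> sum (\<lambda>x. x) S = b + of_nat k * t}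
        \<subseteq> {S. S \<subseteq> D \<and> card S = k \<and> finite S \<and> sum (\<lambda>x. x) S = b}"
  proof
    fix S' assume "S' \<in> (\<lambda>S. (\<lambda>x. x + - t) ` S) ` {S. S \<subseteq> (\<lambda>x. x + t) ` D \<and> card S = k \<and> finite S \<and> sum (\<lambda>x. x) S = b + of_nat k * t}"
    then obtain S where S: "S \<subseteq> (\<lambda>x. x + t) ` D" "finite S" "sum (\<lambda>x. x) S = b + of_nat k * t" "k = card S"
      and S': "S' = (\<lambda>x. x + - t) ` S" by auto
    have "(\<lambda>x. x + - t) ` S \<subseteq> D" using S(1) by auto
    moreover have "card ((\<lambda>x. x + - t) ` S) = card S"
      "sum (\<lambda>x. x) ((\<lambda>x. x + - t) ` S) = b"
      using shift_props[OF S(2), of "-t"] S(3,4) by (auto simp: algebra_simps)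
    ultimately show "S' \<in> {S. S \<subseteq> D \<and> card S = k \<and> finite S \<and> sum (\<lambda>x. x) S = b}"
      using S(2,4) S' by simp
  qed
qed

lemma Nsub_split:
  fixes b :: "'a::{finite,comm_ring_1}"
  assumes "k \<ge> 1"
  shows "Nsub k b UNIV = Nsub k b (UNIV - {0}) + Nsub (k-1) b (UNIV - {0})"
proof -
  let ?X = "{S. S \<subseteq> (UNIV::'a set) \<and> card S = k \<and> finite S \<and> sum (\<lambda>x. x) S = b}"
  have e: "?X = {S. S \<subseteq> UNIV - {0} \<and> card S = k \<and> finite S \<and> sum (\<lambda>x. x) S = b} \<union> {S\<in>?X. 0 \<in> S}"
    by auto
  have c2: "card {S\<in>?X. 0\<in>S} = Nsub (k-1) b (UNIV-{0})"
    unfolding Nsub_def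
  proof (rule bij_betw_same_card[of "\<lambda>S. S - {0}"], rule bij_betw_byWitness[where f'="insert 0"])
    show "\<forall>a\<in>{S \<in> ?X. 0 \<in> S}. insert 0 (a - {0}) = a" by auto
    show "\<forall>a'\<in>{S. S \<subseteq> UNIV - {0} \<and> card S = k - 1 \<and> finite S \<and> sum (\<lambda>x. x) S = b}.
           insert 0 a' - {0} = a'" by auto
    show "(\<lambda>S. S - {0}) ` {S \<in> ?X. 0 \<in> S} \<subseteq> {S. S \<subseteq> UNIV - {0} \<and> card S = k - 1 \<and> finite S \<and> sum (\<lambda>x. x) S = b}"
      by (auto simp: sum_diff1)
    show "insert 0 ` {S. S \<subseteq> UNIV - {0} \<and> card S = k - 1 \<and> finite S \<and> sum (\<lambda>x. x) S = b} \<subseteq> {S \<in> ?X. 0 \<in> S}"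
    proof
      fix U assume "U \<in> insert 0 ` {S. S \<subseteq> UNIV - {0} \<and> card S = k - 1 \<and> finite S \<and> sum (\<lambda>x. x) S = b}"
      then obtain T :: "'a set" where T: "T \<subseteq> UNIV - {0}" "card T = k - 1" "sum (\<lambda>x. x) T = b" and U: "U = insert 0 T" by auto
      then have "0 \<notin> T" by blast
      then show "U \<in> {S \<in> ?X. 0 \<in> S}" using T U assms by simp
    qed
  qed
  have "card ?X = Nsub k b (UNIV - {0}) + card {S\<in>?X. 0\<in>S}"
    unfolding Nsub_def by (subst e, rule card_Un_disjoint) auto
  then show ?thesis using c2 unfolding Nsub_def by simp
qed

lemma Nsub_total:
  fixes D :: "'a::{finite,comm_monoid_add} set"
  shows "(\<Sum>b\<in>UNIV. Nsub k b D) = card D choose k"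
proof -
  have "{S. S \<subseteq> D \<and> card S = k} = (\<Union>b\<in>UNIV. {S. S \<subseteq> D \<and> card S = k \<and> finite S \<and> sum (\<lambda>x. x) S = b})"
    by auto
  then have "card D choose k = card (\<Union>b\<in>UNIV. {S. S \<subseteq> D \<and> card S = k \<and> finite S \<and> sum (\<lambda>x. x) S = b})"
    by (metis n_subsets finite)
  also have "\<dots> = (\<Sum>b\<in>UNIV. Nsub k b D)"
    unfolding Nsub_def by (rule card_UN_disjoint) auto
  finally show ?thesis by simp
qed

lemma Nsub_uniform:
  fixes b c :: "'a::{finite,field}"
  assumes "\<not> CHAR('a) dvd k"
  shows "Nsub k b UNIV = Nsub k c UNIV"
proof -
  have k: "of_nat k \<noteq> (0::'a)" using assms of_nat_eq_0_iff_char_dvd by blast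
  have s: "(\<lambda>x. x + t) ` (UNIV::'a set) = UNIV" for t
    by (auto intro!: image_eqI[where x="_ - t"])
  show ?thesis using Nsub_shift[of k b UNIV "(c - b) / of_nat k"] k by (simp add: s)
qed

lemma Nsub_free:
  fixes b :: "'a::{finite,field}"
  assumes "\<not> CHAR('a) dvd k"
  shows "CARD('a) * Nsub k b UNIV = CARD('a) choose k"
proof -
  have "CARD('a) choose k = (\<Sum>c\<in>UNIV. Nsub k (c::'a) UNIV)" using Nsub_total[of k "UNIV::'a set"] by simp
  also have "\<dots> = (\<Sum>c\<in>(UNIV::'a set). Nsub k b UNIV)" using Nsub_uniform[OF assms] by metis
  finally show ?thesis by simp
qed

lemma Nsub_dvd:
  fixes b :: "'a::{finite,field}"
  assumes "CHAR('a) dvd k"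
  shows "CARD('a) * Nsub k b (UNIV - {0}) = (CARD('a) - k) * Nsub k b UNIV"
proof -
  let ?X = "{S. S \<subseteq> (UNIV::'a set) \<and> card S = k \<and> finite S \<and> sum (\<lambda>x. x) S = b}"
  have k: "of_nat k = (0::'a)" using assms of_nat_eq_0_iff_char_dvd by blast
  have s: "(\<lambda>x. x + t) ` (UNIV - {0}) = UNIV - {t::'a}" for t
    by (auto intro!: image_eqI[where x="_ - t"])
  have e: "Nsub k b (UNIV - {0}) = (\<Sum>S\<in>?X. if t \<notin> S then 1 else 0)" for t
  proof -
    have "Nsub k b (UNIV - {0}) = Nsub k b (UNIV - {t})"
      using Nsub_shift[of k b "UNIV - {0}" t] k by (simp add: s)
    also have "\<dots> = card {S\<in>?X. t \<notin> S}" unfolding Nsub_def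
      by (rule arg_cong[where f=card]) auto
    also have "\<dots> = (\<Sum>S\<in>?X. if t \<notin> S then 1 else 0)"
      by (simp add: sum.inter_filter[symmetric])
    finally show ?thesis .
  qed
  have "CARD('a) * Nsub k b (UNIV - {0}) = (\<Sum>t\<in>(UNIV::'a set). Nsub k b (UNIV - {0}))" by simp
  also have "\<dots> = (\<Sum>t\<in>(UNIV::'a set). \<Sum>S\<in>?X. if t \<notin> S then 1 else 0)" using e by simp
  also have "\<dots> = (\<Sum>S\<in>?X. \<Sum>t\<in>(UNIV::'a set). if t \<notin> S then 1 else 0)" by (rule sum.swap)
  also have "\<dots> = (\<Sum>S\<in>?X. CARD('a) - k)"
  proof (rule sum.cong)
    fix S assume "S \<in> ?X"
    then have "card S = k" by auto
    have "(\<Sum>t\<in>(UNIV::'a set). if t \<notin> S then 1 else 0) = card (UNIV - S)"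
      proof -
      have "{t. t \<notin> S} = UNIV - S" by auto
      then show ?thesis by (simp add: sum.If_cases)
    qed
    also have "\<dots> = CARD('a) - k" using \<open>card S = k\<close> by (simp add: card_Diff_subset)
    finally show "(\<Sum>t\<in>(UNIV::'a set). if t \<notin> S then 1 else 0) = CARD('a) - k" .
  qed simp
  also have "\<dots> = (CARD('a) - k) * Nsub k b UNIV" unfolding Nsub_def by simp
  finally show ?thesis .
qed

lemma Nsub_zero:
  "Nsub 0 b (D::'a::comm_monoid_add set) = (if b = 0 then 1 else 0)"
proof -
  have "{S. S \<subseteq> D \<and> card S = 0 \<and> finite S \<and> sum (\<lambda>x. x) S = b} = (if b = 0 then {{}} else {})"
    by auto
  then show ?thesis unfolding Nsub_def by simp
qed

lemma binom_step_real:
  assumes "k \<le> n"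
  shows "real (Suc k) * real (n choose Suc k) = (real n - real k) * real (n choose k)"
  using gbinomial_mult_1[of "real n" k] by (simp add: binomial_gbinomial algebra_simps)

lemma gbinom_step:
  "real (Suc j) * ((a::real) gchoose Suc j) = (a - real j) * (a gchoose j)"
  using gbinomial_mult_1[of a j] by (simp add: algebra_simps)

lemma l1: assumes "\<not> (p::nat) dvd Suc k" "p > 0" shows "Suc k div p = k div p"
proof -
  have r: "k mod p < p" using assms(2) by simp
  have e: "Suc k = (k mod p + 1) + k div p * p" by simp
  have ne: "k mod p + 1 \<noteq> p"
  proof
    assume h: "k mod p + 1 = p"
    from e have "Suc k = p + k div p * p" by (simp only: h)
    then have "p dvd Suc k" by simp
    then show False using assms(1) by simp
  qed
  have "(k mod p + 1) div p = 0" using r ne by simp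
  moreover from e have "Suc k div p = ((k mod p + 1) + k div p * p) div p"
    by (rule arg_cong[where f="\<lambda>x. x div p"])
  moreover have "((k mod p + 1) + k div p * p) div p = k div p + (k mod p + 1) div p"
    by (rule div_mult_self1) (use assms(2) in simp)
  ultimately show ?thesis by simp
qed
lemma l2: assumes "Suc k = (p::nat) * m" "p > 0" shows "k div p = m - 1"
proof -
  obtain j where j: "m = Suc j" using assms by (cases m) auto
  have e: "k = (p - 1) + j * p" using assms j by (simp add: algebra_simps)
  have "(p - 1 + j * p) div p = j + (p - 1) div p"
    by (rule div_mult_self1) (use assms(2) in simp)
  then have "(p - 1 + j * p) div p = j" using assms(2) by simp
  then show ?thesis using e j by (metis diff_Suc_1)
qed

lemma A_formula:
  fixes b :: "'a::{finite,field}"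
  shows "k \<le> CARD('a) \<Longrightarrow> real (Nsub k b (UNIV - {0})) =
     1 / real CARD('a) * real ((CARD('a) - 1) choose k)
     + (-1) ^ (k + k div CHAR('a)) * (vq b / real CARD('a))
       * ((real CARD('a) / real CHAR('a) - 1) gchoose (k div CHAR('a)))"
proof (induction k)
  case 0
  have q: "real CARD('a) > 0" by simp
  show ?case using q by (simp add: Nsub_zero vq_def field_simps)
next
  case (Suc k)
  define q where "q = CARD('a)"
  define p where "p = CHAR('a)"
  have p0: "p > 0" unfolding p_def by (rule finite_imp_CHAR_pos) simp
  have p1: "p \<noteq> 1" unfolding p_def by simp
  have q0: "real q > 0" unfolding q_def by simp
  have kq: "Suc k \<le> q" using Suc.prems unfolding q_def .
  define A where "A j = real (Nsub j b (UNIV - {0}))" for j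
  define F where "F j = (-1) ^ (j + j div p) * (vq b / real q)
       * ((real q / real p - 1) gchoose (j div p))" for j
  have IH: "A k = real ((q - 1) choose k) / real q + F k"
    using Suc.IH kq unfolding A_def F_def q_def p_def by simp
  have split: "real (Nsub (Suc k) b UNIV) = A (Suc k) + A k"
    unfolding A_def using Nsub_split[of "Suc k" b] by simp
  have pascal: "real (q choose Suc k) = real ((q-1) choose Suc k) + real ((q - 1) choose k)"
    using q0 by (cases q) auto
  have goal: "A (Suc k) = real ((q - 1) choose Suc k) / real q + F (Suc k)"
  proof (cases "p dvd Suc k")
    case False
    have M: "real q * real (Nsub (Suc k) b UNIV) = real (q choose Suc k)"
    proof -
      have "q * Nsub (Suc k) b UNIV = q choose Suc k"
        using Nsub_free[of "Suc k" b] False unfolding q_def p_def by simp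
      then show ?thesis by (metis of_nat_mult)
    qed
    have dv: "Suc k div p = k div p"
      using l1 False p0 by blast
    have F: "F (Suc k) = - F k" unfolding F_def dv by simp
    have "A (Suc k) = real (q choose Suc k) / real q - A k"
      using M split q0 by (simp add: field_simps)
    then have "A (Suc k) = (real ((q-1) choose Suc k) + real ((q-1) choose k)) / real q
        - (real ((q-1) choose k) / real q + F k)" using IH pascal by simp
    then show ?thesis using F by (simp add: add_divide_distrib)
  next
    case True
    then obtain m where m: "Suc k = p * m" by blast
    have m1: "m \<ge> 1" using m by (cases m) auto
    have d1: "Suc k div p = m" using m p0 by simp
    have d2: "k div p = m - 1" using l2 m p0 by blast
    have M: "real q * A (Suc k) = (real q - real (Suc k)) * real (Nsub (Suc k) b UNIV)"
    proof -
      have "q * Nsub (Suc k) b (UNIV - {0}) = (q - Suc k) * Nsub (Suc k) b UNIV"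
        using Nsub_dvd[of "Suc k" b] True unfolding q_def p_def by simp
      then have "real (q * Nsub (Suc k) b (UNIV - {0})) = real ((q - Suc k) * Nsub (Suc k) b UNIV)"
        by simp
      then show ?thesis unfolding A_def using kq by (simp add: of_nat_diff)
    qed
    have rec: "real (Suc k) * A (Suc k) = (real q - real (Suc k)) * A k"
      using M split by (simp add: algebra_simps)
    have Bc: "real (Suc k) * real ((q-1) choose Suc k) = (real q - real (Suc k)) * real ((q-1) choose k)"
      using binom_step_real[of k "q-1"] kq by (simp add: of_nat_diff)
    have Fc: "real (Suc k) * F (Suc k) = (real q - real (Suc k)) * F k"
    proof -
      obtain j where j: "m = Suc j" using m1 by (cases m) auto
      have g: "real m * ((real q / real p - 1) gchoose m) = (real q / real p - real m) * ((real q / real p - 1) gchoose j)"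
        using gbinom_step[of j "real q / real p - 1"] j by simp
      have sg: "((-1::real) ^ (Suc k + m)) = (-1) ^ (k + j)" using j by simp
      have "real (Suc k) * F (Suc k) = real p * (real m * ((real q / real p - 1) gchoose m)) * ((-1) ^ (Suc k + m) * (vq b / real q))"
        unfolding F_def d1 using m by (simp add: algebra_simps)
      also have "\<dots> = real p * (real q / real p - real m) * ((real q / real p - 1) gchoose j) * ((-1) ^ (k + j) * (vq b / real q))"
        using g sg by simp
      also have "\<dots> = (real q - real (Suc k)) * F k"
        unfolding F_def d2 using m j p0 q0 by (simp add: field_simps)
      finally show ?thesis .
    qed
    have "real (Suc k) * A (Suc k) = (real q - real (Suc k)) * real ((q-1) choose k) / real q
          + (real q - real (Suc k)) * F k"
      using rec IH by (simp add: distrib_left)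
    also have "\<dots> = real (Suc k) * real ((q-1) choose Suc k) / real q + real (Suc k) * F (Suc k)"
      unfolding Bc Fc ..
    also have "\<dots> = real (Suc k) * (real ((q - 1) choose Suc k) / real q + F (Suc k))"
      by (simp add: distrib_left)
    finally have "real (Suc k) * A (Suc k) = real (Suc k) * (real ((q - 1) choose Suc k) / real q + F (Suc k))" .
    then show ?thesis by (metis mult_cancel_left of_nat_eq_0_iff nat.distinct(1))
  qed
  then show ?case unfolding A_def F_def q_def p_def by simp
qed

theorem theorem1p2:
  fixes b :: "'a::{finite,field}"
  defines "q \<equiv> CARD('a)" and "p \<equiv> CHAR('a)"
  shows "(\<forall>k. 1 \<le> k \<and> k \<le> q - 1 \<longrightarrow>
            real (Nsub k b (UNIV - {0})) =
              1 / real q * real ((q - 1) choose k)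
              + (-1) ^ (k + k div p) * (vq b / real q)
                * ((real q / real p - 1) gchoose (k div p)))
       \<and> (\<forall>k. 1 \<le> k \<and> k \<le> q \<and> \<not> p dvd k \<longrightarrow>
            real (Nsub k b (UNIV :: 'a set)) = 1 / real q * real (q choose k))
       \<and> (\<forall>k. 1 \<le> k \<and> k \<le> q \<and> p dvd k \<longrightarrow>
            real (Nsub k b (UNIV :: 'a set)) =
              1 / real q * real (q choose k)
              + (-1) ^ (k + k div p) * (vq b / real q)
                * ((real q / real p) gchoose (k div p)))"
proof (intro conjI allI impI)
  have p0: "p > 0" unfolding p_def by (rule finite_imp_CHAR_pos) simp
  have q0: "real q > 0" unfolding q_def by simp
  fix k
  {
    assume "1 \<le> k \<and> k \<le> q - 1"
    then have kq: "k \<le> CARD('a)" unfolding q_def by linarith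
    show "real (Nsub k b (UNIV - {0})) =
              1 / real q * real ((q - 1) choose k)
              + (-1) ^ (k + k div p) * (vq b / real q)
                * ((real q / real p - 1) gchoose (k div p))"
      using A_formula[OF kq, of b] unfolding q_def p_def by simp
  next
    assume h: "1 \<le> k \<and> k \<le> q \<and> \<not> p dvd k"
    have "q * Nsub k b UNIV = q choose k" using Nsub_free[of k b] h unfolding q_def p_def by simp
    then have "real q * real (Nsub k b UNIV) = real (q choose k)" by (metis of_nat_mult)
    then show "real (Nsub k b (UNIV :: 'a set)) = 1 / real q * real (q choose k)"
      using q0 by (simp add: field_simps)
  next
    assume h: "1 \<le> k \<and> k \<le> q \<and> p dvd k"
    then obtain m where m: "k = p * m" by blast
    obtain j where j: "m = Suc j" using m h by (cases m) auto
    obtain i where i: "k = Suc i" using h by (cases k) auto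
    have d1: "k div p = m" using m p0 by simp
    have d2: "i div p = j" using l2[of i p m] m i j p0 by simp
    define F where "F a t = (-1) ^ t * (vq b / real q) * (a gchoose (t div p))" for a t
    have A1: "real (Nsub k b (UNIV - {0})) = real ((q - 1) choose k) / real q
       + (-1) ^ (k + m) * (vq b / real q) * ((real q / real p - 1) gchoose m)"
      using A_formula[of k b] h d1 unfolding q_def p_def by simp
    have A2: "real (Nsub i b (UNIV - {0})) = real ((q - 1) choose i) / real q
       + (-1) ^ (k + m) * (vq b / real q) * ((real q / real p - 1) gchoose j)"
    proof -
      have s: "(-1::real) ^ (i + j) = (-1) ^ (k + m)" using i j by simp
      show ?thesis using A_formula[of i b] h d2 i s unfolding q_def p_def by simp
    qed
    have spl: "real (Nsub k b UNIV) = real (Nsub k b (UNIV - {0})) + real (Nsub i b (UNIV - {0}))"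
      using Nsub_split[of k b] h i by simp
    have pascal: "real (q choose k) = real ((q-1) choose k) + real ((q - 1) choose i)"
      using q0 i by (cases q) auto
    have gb: "(real q / real p) gchoose m = ((real q / real p - 1) gchoose j) + ((real q / real p - 1) gchoose m)"
      using gbinomial_reduce_nat[of m "real q / real p"] j by simp
    show "real (Nsub k b (UNIV :: 'a set)) =
              1 / real q * real (q choose k)
              + (-1) ^ (k + k div p) * (vq b / real q)
                * ((real q / real p) gchoose (k div p))"
      unfolding spl A1 A2 pascal d1 gb by (simp add: algebra_simps add_divide_distrib)
  }
qed

end
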